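(* Let $\mathcal{H}$ be a quantum system of dimension $d$ with orthonormal basis $\{|i\rangle\}_{i=1}^d$, and let $\sigma=\sum_{i=1}^d p_i|i\rangle\langle i|$ where $\{p_i\}$ is a probability distribution with $p_1\ge p_2\ge\cdots\ge p_d$. Let $\epsilon>0$, and let $\sigma^{(A)}$ and $\sigma^{(G)}$ be the approximate states of $\sigma$ obtained by the arithmetic mean method and the geometric mean method, respectively. Then $$\|\sigma^{(A)}-\sigma\|_1\le\epsilon,\qquad \|\sigma^{(G)}-\sigma\|_1\le\epsilon .$$
   Context: $\|\cdot\|_1$ is the trace norm. Arithmetic mean method: let $k_0=0$; for $i=1,2,\dots$ let $k_i$ be the largest integer ($\le d$) such that $|p_{k_{i-1}+1}-p_{k_i}|\le\epsilon/d$, and set $I_i=\{k_{i-1}+1,\dots,k_i\}$; stop at the index $L$ with $k_L=d$. For $j\in I_i$ set $p_j^{(A)}=\frac{1}{|I_i|}\sum_{m\in I_i}p_m$, and $\sigma^{(A)}=\sum_{j=1}^d p_j^{(A)}|j\rangle\langle j|$. Geometric mean method: identical except that $k_i$ is the largest integer ($\le d$) such that $p_{k_i}/p_{k_{i-1}+1}\ge 1/(1+\epsilon)$; the bins $I_i$ are defined likewise, $p_j^{(G)}=\frac{1}{|I_i|}\sum_{m\in I_i}p_m$ for $j\in I_i$, and $\sigma^{(G)}=\sum_{j} p_j^{(G)}|j\rangle\langle j|$. *)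

theory Defs
  imports Complex_Main "Jordan_Normal_Form.Matrix"
begin

text \<open>Operators on a d-dimensional Hilbert space are represented as d x d complex
  matrices w.r.t. the fixed orthonormal basis |1>,...,|d> (matrix index i-1 for |i>).\<close>

definition dagger :: "complex mat \<Rightarrow> complex mat" where
  "dagger A = mat (dim_col A) (dim_row A) (\<lambda>(i,j). cnj (A $$ (j,i)))"

definition psd :: "nat \<Rightarrow> complex mat \<Rightarrow> bool" where
  "psd n B \<longleftrightarrow> B \<in> carrier_mat n n \<and>
     (\<forall>v \<in> carrier_vec n. Im (v \<bullet>c (B *\<^sub>v v)) = 0 \<and> Re (v \<bullet>c (B *\<^sub>v v)) \<ge> 0)"

definition mtrace :: "complex mat \<Rightarrow> complex" where
  "mtrace A = (\<Sum>i<dim_row A. A $$ (i,i))"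

definition trace_norm :: "complex mat \<Rightarrow> real" where
  "trace_norm A = Re (mtrace (THE B. psd (dim_col A) B \<and> B * B = dagger A * A))"

definition diag_state :: "nat \<Rightarrow> (nat \<Rightarrow> real) \<Rightarrow> complex mat" where
  "diag_state d q = mat d d (\<lambda>(i,j). if i = j then complex_of_real (q (i+1)) else 0)"

fun bnd :: "nat \<Rightarrow> (nat \<Rightarrow> nat \<Rightarrow> bool) \<Rightarrow> nat \<Rightarrow> nat" where
  "bnd d cond 0 = 0"
| "bnd d cond (Suc i) =
     (if bnd d cond i \<ge> d then d
      else (GREATEST k. k \<le> d \<and> cond (Suc (bnd d cond i)) k))"

definition binned :: "nat \<Rightarrow> (nat \<Rightarrow> nat \<Rightarrow> bool) \<Rightarrow> (nat \<Rightarrow> real) \<Rightarrow> nat \<Rightarrow> real" where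
  "binned d cond p j =
     (let i = (LEAST i. j \<le> bnd d cond i);
          I = {Suc (bnd d cond (i - 1)) .. bnd d cond i}
      in (\<Sum>m\<in>I. p m) / real (card I))"

definition arith_cond :: "nat \<Rightarrow> real \<Rightarrow> (nat \<Rightarrow> real) \<Rightarrow> nat \<Rightarrow> nat \<Rightarrow> bool" where
  "arith_cond d \<epsilon> p s k \<longleftrightarrow> \<bar>p s - p k\<bar> \<le> \<epsilon> / real d"

text \<open>p_k / p_s \<ge> 1/(1+\<epsilon>), written multiplicatively (equivalent for p_s > 0).\<close>
definition geom_cond :: "real \<Rightarrow> (nat \<Rightarrow> real) \<Rightarrow> nat \<Rightarrow> nat \<Rightarrow> bool" where
  "geom_cond \<epsilon> p s k \<longleftrightarrow> (1 + \<epsilon>) * p k \<ge> p s"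

definition sigma_A :: "nat \<Rightarrow> real \<Rightarrow> (nat \<Rightarrow> real) \<Rightarrow> complex mat" where
  "sigma_A d \<epsilon> p = diag_state d (binned d (arith_cond d \<epsilon> p) p)"

definition sigma_G :: "nat \<Rightarrow> real \<Rightarrow> (nat \<Rightarrow> real) \<Rightarrow> complex mat" where
  "sigma_G d \<epsilon> p = diag_state d (binned d (geom_cond \<epsilon> p) p)"

end

theory Submission
  imports Defs
begin

definition diagm :: "nat \<Rightarrow> (nat \<Rightarrow> complex) \<Rightarrow> complex mat" where
  "diagm n c = mat n n (\<lambda>(i,j). if i = j then c i else 0)"

lemma diagm_carrier[simp]: "diagm n c \<in> carrier_mat n n"
  by (simp add: diagm_def)

lemma dim_diagm[simp]: "dim_row (diagm n c) = n" "dim_col (diagm n c) = n"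
  by (simp_all add: diagm_def)

lemma diagm_index[simp]: "i < n \<Longrightarrow> j < n \<Longrightarrow> diagm n c $$ (i,j) = (if i = j then c i else 0)"
  by (simp add: diagm_def)

lemma diagm_mult_left: assumes "dim_row M = n" "i < n" "j < dim_col M"
  shows "(diagm n c * M) $$ (i,j) = c i * M $$ (i,j)"
proof -
  have "(diagm n c * M) $$ (i,j) = (\<Sum>k\<in>{0..<n}. (if i = k then c i else 0) * M $$ (k,j))"
    using assms by (simp add: scalar_prod_def diagm_def)
  also have "\<dots> = (\<Sum>k\<in>{0..<n}. (if k = i then c i * M $$ (i,j) else 0))"
    by (rule sum.cong) auto
  also have "\<dots> = c i * M $$ (i,j)"
    using assms by simp
  finally show ?thesis .
qed

lemma diagm_mult_right: assumes "dim_col M = n" "i < dim_row M" "j < n"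
  shows "(M * diagm n c) $$ (i,j) = M $$ (i,j) * c j"
proof -
  have "(M * diagm n c) $$ (i,j) = (\<Sum>k\<in>{0..<n}. M $$ (i,k) * (if k = j then c j else 0))"
    using assms by (simp add: scalar_prod_def diagm_def, intro sum.cong) auto
  also have "\<dots> = (\<Sum>k\<in>{0..<n}. (if k = j then M $$ (i,j) * c j else 0))"
    by (rule sum.cong) auto
  also have "\<dots> = M $$ (i,j) * c j"
    using assms by simp
  finally show ?thesis .
qed

lemma diagm_mult_vec: assumes "v \<in> carrier_vec n" "i < n"
  shows "(diagm n c *\<^sub>v v) $ i = c i * v $ i"
proof -
  have "(diagm n c *\<^sub>v v) $ i = (\<Sum>k\<in>{0..<n}. (if i = k then c i else 0) * v $ k)"
    using assms by (simp add: scalar_prod_def diagm_def)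
  also have "\<dots> = (\<Sum>k\<in>{0..<n}. (if k = i then c i * v $ i else 0))"
    by (rule sum.cong) auto
  also have "\<dots> = c i * v $ i"
    using assms by simp
  finally show ?thesis .
qed

lemma qform: assumes "B \<in> carrier_mat n n" "v \<in> carrier_vec n"
  shows "v \<bullet>c (B *\<^sub>v v) = (\<Sum>m<n. v $ m * cnj (\<Sum>l<n. B $$ (m,l) * v $ l))"
  using assms by (simp add: scalar_prod_def atLeast0LessThan)

lemma two_point_sum: assumes "i < (n::nat)" "j < n" "i \<noteq> j"
  shows "(\<Sum>l<n. f l * (if l = i then x else if l = j then y else 0)) = f i * x + f j * (y::complex)"
proof -
  have "(\<Sum>l<n. f l * (if l = i then x else if l = j then y else 0))
     = (\<Sum>l<n. (if l = i then f i * x else 0) + (if l = j then f j * y else 0))"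
    using assms by (intro sum.cong) auto
  also have "\<dots> = f i * x + f j * y" using assms by (simp add: sum.distrib sum.delta)
  finally show ?thesis .
qed

lemma qform_two: assumes B: "B \<in> carrier_mat n n" and ij: "i < n" "j < n" "i \<noteq> j"
  shows "vec n (\<lambda>m. if m = i then x else if m = j then y else 0) \<bullet>c
     (B *\<^sub>v vec n (\<lambda>m. if m = i then x else if m = j then y else 0))
   = x * cnj (B $$ (i,i) * x + B $$ (i,j) * y) + y * cnj (B $$ (j,i) * x + B $$ (j,j) * y)"
proof -
  let ?v = "vec n (\<lambda>m. if m = i then x else if m = j then y else 0)"
  have "?v \<bullet>c (B *\<^sub>v ?v) = (\<Sum>m<n. ?v $ m * cnj (\<Sum>l<n. B $$ (m,l) * ?v $ l))"
    by (rule qform[OF B]) simp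
  also have "\<dots> = (\<Sum>m<n. (if m = i then x else if m = j then y else 0) *
       cnj (B $$ (m,i) * x + B $$ (m,j) * y))"
    using ij by (intro sum.cong refl) (simp add: two_point_sum)
  also have "\<dots> = (\<Sum>m<n. cnj (B $$ (m,i) * x + B $$ (m,j) * y) * (if m = i then x else if m = j then y else 0))"
    by (simp add: mult.commute)
  also have "\<dots> = x * cnj (B $$ (i,i) * x + B $$ (i,j) * y) + y * cnj (B $$ (j,i) * x + B $$ (j,j) * y)"
    using ij by (subst two_point_sum) (auto simp: mult.commute)
  finally show ?thesis .
qed

lemma qform_one: assumes B: "B \<in> carrier_mat n n" and i: "i < n"
  shows "vec n (\<lambda>m. if m = i then 1 else 0) \<bullet>c (B *\<^sub>v vec n (\<lambda>m. if m = i then 1 else 0))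
   = cnj (B $$ (i,i))"
proof -
  let ?v = "vec n (\<lambda>m. if m = i then 1 else 0) :: complex vec"
  have "?v \<bullet>c (B *\<^sub>v ?v) = (\<Sum>m<n. ?v $ m * cnj (\<Sum>l<n. B $$ (m,l) * ?v $ l))"
    by (rule qform[OF B]) simp
  also have "\<dots> = (\<Sum>m<n. (if m = i then cnj (B $$ (i,i)) else 0))"
    using i by (intro sum.cong refl) (simp add: if_distrib cong: if_cong)
  also have "\<dots> = cnj (B $$ (i,i))" using i by simp
  finally show ?thesis .
qed

lemma psd_herm: assumes "psd n B" "i < n" "j < n"
  shows "B $$ (j,i) = cnj (B $$ (i,j))"
proof (cases "i = j")
  case True
  have B: "B \<in> carrier_mat n n" using assms unfolding psd_def by auto
  have "Im (cnj (B $$ (i,i))) = 0"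
    using assms(1) qform_one[OF B assms(2)] unfolding psd_def
    by (metis (no_types, lifting) vec_carrier)
  then show ?thesis using True by (simp add: complex_eq_iff)
next
  case False
  have B: "B \<in> carrier_mat n n" using assms unfolding psd_def by auto
  have im: "\<And>x y. Im (x * cnj (B $$ (i,i) * x + B $$ (i,j) * y) + y * cnj (B $$ (j,i) * x + B $$ (j,j) * y)) = 0"
    using assms(1) qform_two[OF B assms(2,3) False] unfolding psd_def
    by (metis (no_types, lifting) vec_carrier)
  have 1: "Im (B $$ (i,i)) = 0" using im[of 1 0] by simp
  have 2: "Im (B $$ (j,j)) = 0" using im[of 0 1] by simp
  have 3: "Im (B $$ (i,j)) + Im (B $$ (j,i)) = 0" using im[of 1 1] 1 2 by simp
  have 4: "Re (B $$ (i,j)) = Re (B $$ (j,i))" using im[of 1 \<i>] 1 2 by (simp add: algebra_simps)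
  show ?thesis using 3 4 by (simp add: complex_eq_iff)
qed

lemma qform_diag: assumes v: "v \<in> carrier_vec n"
  shows "v \<bullet>c (diagm n (\<lambda>i. complex_of_real (c i)) *\<^sub>v v) = complex_of_real (\<Sum>m<n. c m * (cmod (v $ m))^2)"
proof -
  have "v \<bullet>c (diagm n (\<lambda>i. complex_of_real (c i)) *\<^sub>v v) = (\<Sum>m\<in>{0..<n}. v $ m * cnj (complex_of_real (c m) * v $ m))"
    unfolding scalar_prod_def dim_vec_conjugate dim_mult_mat_vec dim_diagm
    using v by (intro sum.cong refl) (simp add: diagm_mult_vec del: index_mult_mat_vec)
  also have "\<dots> = (\<Sum>m\<in>{0..<n}. complex_of_real (c m * (cmod (v $ m))^2))"
  proof (rule sum.cong[OF refl])
    fix m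
    have "v $ m * cnj (v $ m) = complex_of_real ((cmod (v $ m))^2)"
      by (simp only: complex_norm_square)
    then show "v $ m * cnj (complex_of_real (c m) * v $ m) = complex_of_real (c m * (cmod (v $ m))^2)"
      by (simp add: algebra_simps)
  qed
  also have "\<dots> = complex_of_real (\<Sum>m<n. c m * (cmod (v $ m))^2)"
    by (simp add: atLeast0LessThan)
  finally show ?thesis .
qed

lemma psd_diag: assumes "\<forall>i<n. c i \<ge> 0"
  shows "psd n (diagm n (\<lambda>i. complex_of_real (c i)))"
  unfolding psd_def using assms by (auto simp: qform_diag intro!: sum_nonneg)

lemma sqrt_unique:
  fixes c :: "nat \<Rightarrow> real"
  assumes c: "\<forall>i<n. c i \<ge> 0" and psd: "psd n B"
    and sq: "B * B = diagm n (\<lambda>i. complex_of_real (c i ^ 2))"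
  shows "B = diagm n (\<lambda>i. complex_of_real (c i))"
proof -
  define C where "C = diagm n (\<lambda>i. complex_of_real (c i))"
  define D where "D = diagm n (\<lambda>i. complex_of_real (c i ^ 2))"
  have B: "B \<in> carrier_mat n n" using psd unfolding psd_def by auto
  have Cc: "C \<in> carrier_mat n n" "D \<in> carrier_mat n n" unfolding C_def D_def by auto
  have CC: "C * C = D"
    by (rule eq_matI) (auto simp: C_def D_def diagm_mult_left power2_eq_square simp del: index_mult_mat(1))
  have BD: "B * D = D * B"
    using B sq unfolding D_def[symmetric] by (metis assoc_mult_mat)
  have comm: "B * C = C * B"
  proof (rule eq_matI)
    fix i j assume ij: "i < dim_row (C * B)" "j < dim_col (C * B)"
    then have ij: "i < n" "j < n" using B Cc by auto
    have "(B * D) $$ (i,j) = (D * B) $$ (i,j)" using BD by simp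
    then have e: "B $$ (i,j) * complex_of_real (c j ^ 2) = complex_of_real (c i ^ 2) * B $$ (i,j)"
      using ij B unfolding D_def by (simp add: diagm_mult_left diagm_mult_right del: index_mult_mat(1) of_real_power)
    have "B $$ (i,j) * complex_of_real (c j) = complex_of_real (c i) * B $$ (i,j)"
    proof (cases "B $$ (i,j) = 0")
      case False
      with e have "complex_of_real (c j ^ 2) = complex_of_real (c i ^ 2)" by (simp add: mult.commute)
      then have "c j ^ 2 = c i ^ 2" by (simp only: of_real_eq_iff)
      then have "c j = c i" using c ij by (simp add: power2_eq_iff_nonneg)
      then show ?thesis by (simp add: mult.commute)
    qed simp
    then show "(B * C) $$ (i,j) = (C * B) $$ (i,j)"
      using ij B unfolding C_def by (simp add: diagm_mult_left diagm_mult_right del: index_mult_mat(1))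
  qed (use B Cc in auto)
  have prod0: "(B + C) * (B - C) = 0\<^sub>m n n"
  proof -
    have "(B + C) * (B - C) = B * (B - C) + C * (B - C)"
      using B Cc by (intro add_mult_distrib_mat) auto
    also have "\<dots> = (B * B - B * C) + (C * B - C * C)"
      using B Cc by (simp add: mult_minus_distrib_mat)
    also have "\<dots> = (D - B * C) + (B * C - D)"
      using sq CC comm unfolding D_def by simp
    also have "\<dots> = 0\<^sub>m n n"
      using B Cc by (intro eq_matI) auto
    finally show ?thesis .
  qed
  define E where "E = B - C"
  have E: "E \<in> carrier_mat n n" using B Cc unfolding E_def by auto
  have Ev: "E *\<^sub>v (E *\<^sub>v u) = 0\<^sub>v n" if u: "u \<in> carrier_vec n" for u
  proof -
    define w where "w = E *\<^sub>v u"
    have w: "w \<in> carrier_vec n" using E u unfolding w_def by auto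
    have BCw: "(B + C) *\<^sub>v w = 0\<^sub>v n"
    proof -
      have "(B + C) *\<^sub>v w = ((B + C) * E) *\<^sub>v u"
        unfolding w_def using B Cc E u by (subst assoc_mult_mat_vec[of _ n n _ n]) auto
      also have "\<dots> = 0\<^sub>v n" unfolding E_def prod0 using u by auto
      finally show ?thesis .
    qed
    have Bw: "B *\<^sub>v w \<in> carrier_vec n" "C *\<^sub>v w \<in> carrier_vec n" using B Cc w by auto
    have "w \<bullet>c ((B + C) *\<^sub>v w) = w \<bullet>c (B *\<^sub>v w) + w \<bullet>c (C *\<^sub>v w)"
    proof -
      have "(B + C) *\<^sub>v w = B *\<^sub>v w + C *\<^sub>v w"
        using B Cc w by (simp add: add_mult_distrib_mat_vec)
      moreover have "conjugate (B *\<^sub>v w + C *\<^sub>v w) = conjugate (B *\<^sub>v w) + conjugate (C *\<^sub>v w)"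
        by (rule conjugate_add_vec) (use Bw in auto)
      moreover have "w \<bullet> (conjugate (B *\<^sub>v w) + conjugate (C *\<^sub>v w)) = w \<bullet>c (B *\<^sub>v w) + w \<bullet>c (C *\<^sub>v w)"
        by (rule scalar_prod_add_distrib[of _ n]) (use w Bw in auto)
      ultimately show ?thesis by simp
    qed
    moreover have "w \<bullet>c ((B + C) *\<^sub>v w) = 0" using BCw w by simp
    ultimately have sum0: "Re (w \<bullet>c (B *\<^sub>v w)) + Re (w \<bullet>c (C *\<^sub>v w)) = 0"
      by (metis plus_complex.sel(1) zero_complex.sel(1))
    have "Re (w \<bullet>c (B *\<^sub>v w)) \<ge> 0" using psd w unfolding psd_def by auto
    moreover have Cq: "Re (w \<bullet>c (C *\<^sub>v w)) = (\<Sum>m<n. c m * (cmod (w $ m))^2)"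
      unfolding C_def using w by (simp add: qform_diag)
    moreover have "(\<Sum>m<n. c m * (cmod (w $ m))^2) \<ge> 0" using c by (auto intro!: sum_nonneg)
    ultimately have "(\<Sum>m<n. c m * (cmod (w $ m))^2) = 0" using sum0 by linarith
    then have each: "\<forall>m\<in>{..<n}. c m * (cmod (w $ m))^2 = 0"
      using c by (subst sum_nonneg_eq_0_iff[symmetric]) auto
    have Cw: "C *\<^sub>v w = 0\<^sub>v n"
    proof (rule eq_vecI)
      fix m assume "m < dim_vec (0\<^sub>v n :: complex vec)"
      then have m: "m < n" by simp
      have "c m * (cmod (w $ m))^2 = 0" using each m by auto
      then have "c m = 0 \<or> w $ m = 0" by auto
      then show "(C *\<^sub>v w) $ m = 0\<^sub>v n $ m"
        unfolding C_def using m w by (auto simp: diagm_mult_vec simp del: index_mult_mat_vec)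
    qed (use Cc in auto)
    have "B *\<^sub>v w = (B + C) *\<^sub>v w - C *\<^sub>v w"
      using B Cc w Bw by (simp add: add_mult_distrib_mat_vec, intro eq_vecI) auto
    then have Bw0: "B *\<^sub>v w = 0\<^sub>v n" using BCw Cw by simp
    have "E *\<^sub>v w = B *\<^sub>v w - C *\<^sub>v w"
      unfolding E_def using B Cc w by (simp add: minus_mult_distrib_mat_vec)
    then show ?thesis unfolding w_def[symmetric] using Bw0 Cw by simp
  qed
  have EE: "(E * E) $$ (i,j) = 0" if ij: "i < n" "j < n" for i j
  proof -
    have "(E * E) $$ (i,j) = ((E * E) *\<^sub>v unit_vec n j) $ i"
      using E ij by (simp del: assoc_mult_mat_vec)
    also have "\<dots> = (E *\<^sub>v (E *\<^sub>v unit_vec n j)) $ i"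
      using E by simp
    also have "\<dots> = 0" using Ev[of "unit_vec n j"] ij by simp
    finally show ?thesis .
  qed
  have Eh: "E $$ (k,i) = cnj (E $$ (i,k))" if "i < n" "k < n" for i k
    using psd_herm[OF psd that] that B Cc unfolding E_def C_def by auto
  have E0: "E $$ (i,k) = 0" if ik: "i < n" "k < n" for i k
  proof -
    have "(E * E) $$ (i,i) = (\<Sum>l\<in>{0..<n}. E $$ (i,l) * E $$ (l,i))"
      using E ik by (simp add: scalar_prod_def)
    also have "\<dots> = (\<Sum>l\<in>{0..<n}. complex_of_real ((cmod (E $$ (i,l)))^2))"
    proof (rule sum.cong[OF refl])
      fix l assume "l \<in> {0..<n}"
      then have "E $$ (l,i) = cnj (E $$ (i,l))" using ik by (intro Eh) auto
      then show "E $$ (i,l) * E $$ (l,i) = complex_of_real ((cmod (E $$ (i,l)))^2)"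
        by (simp only: complex_norm_square)
    qed
    also have "\<dots> = complex_of_real (\<Sum>l\<in>{0..<n}. (cmod (E $$ (i,l)))^2)" by simp
    finally have "(E * E) $$ (i,i) = complex_of_real (\<Sum>l\<in>{0..<n}. (cmod (E $$ (i,l)))^2)" .
    then have "(\<Sum>l\<in>{0..<n}. (cmod (E $$ (i,l)))^2) = 0" using EE[OF ik(1) ik(1)]
      by (metis of_real_eq_0_iff)
    then have "(cmod (E $$ (i,k)))^2 = 0" using ik by (subst (asm) sum_nonneg_eq_0_iff) auto
    then show ?thesis by simp
  qed
  show ?thesis
  proof (rule eq_matI)
    fix i j assume "i < dim_row (diagm n (\<lambda>i. complex_of_real (c i)))" "j < dim_col (diagm n (\<lambda>i. complex_of_real (c i)))"
    then have ij: "i < n" "j < n" by auto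
    have "E $$ (i,j) = B $$ (i,j) - C $$ (i,j)" unfolding E_def using B Cc ij by simp
    then show "B $$ (i,j) = diagm n (\<lambda>i. complex_of_real (c i)) $$ (i,j)"
      using E0[OF ij] unfolding C_def by simp
  qed (use B in auto)
qed

lemma trace_norm_diag:
  fixes a :: "nat \<Rightarrow> real"
  shows "trace_norm (diagm n (\<lambda>i. complex_of_real (a i))) = (\<Sum>i<n. \<bar>a i\<bar>)"
proof -
  let ?A = "diagm n (\<lambda>i. complex_of_real (a i))"
  let ?C = "diagm n (\<lambda>i. complex_of_real \<bar>a i\<bar>)"
  let ?D = "diagm n (\<lambda>i. complex_of_real (\<bar>a i\<bar> ^ 2))"
  have sq: "complex_of_real \<bar>a j\<bar> * complex_of_real \<bar>a j\<bar> = complex_of_real (a j) * complex_of_real (a j)" for j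
    by (metis abs_mult_self_eq of_real_mult)
  have dag: "dagger ?A = ?A"
    by (rule eq_matI) (auto simp: dagger_def)
  have AA: "dagger ?A * ?A = ?D"
    unfolding dag by (rule eq_matI) (auto simp: diagm_mult_left power2_eq_square simp del: index_mult_mat(1) intro!: sq)
  have CC: "?C * ?C = ?D"
    by (rule eq_matI) (auto simp: diagm_mult_left power2_eq_square simp del: index_mult_mat(1) intro!: sq)
  have "(THE B. psd (dim_col ?A) B \<and> B * B = dagger ?A * ?A) = ?C"
  proof (rule the_equality)
    show "psd (dim_col ?A) ?C \<and> ?C * ?C = dagger ?A * ?A"
      using CC AA psd_diag[of n "\<lambda>i. \<bar>a i\<bar>"] by simp
  next
    fix B assume "psd (dim_col ?A) B \<and> B * B = dagger ?A * ?A"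
    then show "B = ?C" using AA sqrt_unique[of n "\<lambda>i. \<bar>a i\<bar>" B] by simp
  qed
  then have "trace_norm ?A = Re (mtrace ?C)" unfolding trace_norm_def by simp
  also have "\<dots> = (\<Sum>i<n. \<bar>a i\<bar>)" by (simp add: mtrace_def)
  finally show ?thesis .
qed

lemma bnd_ge:
  assumes rf: "\<And>s. 1 \<le> s \<Longrightarrow> s \<le> d \<Longrightarrow> cond s s"
  shows "min i d \<le> bnd d cond i"
proof (induction i)
  case 0 then show ?case by simp
next
  case (Suc i)
  show ?case
  proof (cases "bnd d cond i \<ge> d")
    case True then show ?thesis by simp
  next
    case False
    let ?P = "\<lambda>k. k \<le> d \<and> cond (Suc (bnd d cond i)) k"
    have "?P (Suc (bnd d cond i))" using False rf by auto
    then have "Suc (bnd d cond i) \<le> (GREATEST k. ?P k)"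
      by (rule Greatest_le_nat[where b = d]) auto
    then show ?thesis using False Suc.IH by simp
  qed
qed

lemma bin_exists:
  assumes rf: "\<And>s. 1 \<le> s \<Longrightarrow> s \<le> d \<Longrightarrow> cond s s"
    and j: "1 \<le> j" "j \<le> d"
  shows "\<exists>s k. 1 \<le> s \<and> s \<le> j \<and> j \<le> k \<and> k \<le> d \<and> cond s k \<and>
     binned d cond p j = (\<Sum>m\<in>{s..k}. p m) / real (card {s..k})"
proof -
  define i where "i = (LEAST i. j \<le> bnd d cond i)"
  have "min d d \<le> bnd d cond d" by (rule bnd_ge) (rule rf)
  then have ex: "j \<le> bnd d cond d" using j by simp
  have ji: "j \<le> bnd d cond i" unfolding i_def by (rule LeastI[of _ d]) (rule ex)
  have i0: "i \<noteq> 0" using ji j by (cases i) auto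
  have "\<not> j \<le> bnd d cond (i - 1)" unfolding i_def
    by (rule not_less_Least) (use i0 in \<open>simp add: i_def\<close>)
  then have lt: "bnd d cond (i - 1) < j" by simp
  define s where "s = Suc (bnd d cond (i - 1))"
  let ?P = "\<lambda>k. k \<le> d \<and> cond s k"
  have bi: "bnd d cond i = (GREATEST k. ?P k)"
    using i0 lt j by (cases i) (auto simp: s_def)
  have "?P s" using rf lt j by (auto simp: s_def)
  then have P: "?P (GREATEST k. ?P k)"
    by (rule GreatestI_nat[where b = d]) auto
  show ?thesis
  proof (intro exI conjI)
    show "1 \<le> s" "s \<le> j" using lt by (auto simp: s_def)
    show "j \<le> bnd d cond i" by (rule ji)
    show "bnd d cond i \<le> d" "cond s (bnd d cond i)" using P bi by auto
    show "binned d cond p j = (\<Sum>m\<in>{s..bnd d cond i}. p m) / real (card {s..bnd d cond i})"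
      unfolding binned_def Let_def i_def[symmetric] s_def by simp
  qed
qed

lemma mean_err:
  fixes p :: "nat \<Rightarrow> real"
  assumes mono: "\<And>a b. s \<le> a \<Longrightarrow> a \<le> b \<Longrightarrow> b \<le> k \<Longrightarrow> p b \<le> p a"
    and sj: "s \<le> j" "j \<le> k"
  shows "\<bar>(\<Sum>m\<in>{s..k}. p m) / real (card {s..k}) - p j\<bar> \<le> p s - p k"
proof -
  have c: "real (card {s..k}) > 0" using sj by simp
  have up: "(\<Sum>m\<in>{s..k}. p m) \<le> real (card {s..k}) * p s"
    using sum_mono[of "{s..k}" p "\<lambda>_. p s"] mono by auto
  have lo: "real (card {s..k}) * p k \<le> (\<Sum>m\<in>{s..k}. p m)"
    using sum_mono[of "{s..k}" "\<lambda>_. p k" p] mono by auto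
  have "(\<Sum>m\<in>{s..k}. p m) / real (card {s..k}) \<le> p s"
    using up c by (simp add: divide_le_eq mult.commute)
  moreover have "p k \<le> (\<Sum>m\<in>{s..k}. p m) / real (card {s..k})"
    using lo c by (simp add: le_divide_eq mult.commute)
  moreover have "p k \<le> p j" "p j \<le> p s" using mono sj by auto
  ultimately show ?thesis by linarith
qed

lemma binned_err:
  fixes p :: "nat \<Rightarrow> real"
  assumes rf: "\<And>s. 1 \<le> s \<Longrightarrow> s \<le> d \<Longrightarrow> cond s s"
    and mono: "\<forall>i\<in>{1..d}. \<forall>j\<in>{1..d}. i \<le> j \<longrightarrow> p j \<le> p i"
    and j: "1 \<le> j" "j \<le> d"
  shows "\<exists>s k. 1 \<le> s \<and> s \<le> j \<and> j \<le> k \<and> k \<le> d \<and> cond s k \<and>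
     \<bar>binned d cond p j - p j\<bar> \<le> p s - p k"
proof -
  obtain s k where sk: "1 \<le> s" "s \<le> j" "j \<le> k" "k \<le> d" "cond s k"
    and b: "binned d cond p j = (\<Sum>m\<in>{s..k}. p m) / real (card {s..k})"
    using bin_exists[of d cond j p] rf j by blast
  have "\<bar>binned d cond p j - p j\<bar> \<le> p s - p k"
    unfolding b by (rule mean_err) (use mono sk in auto)
  then show ?thesis using sk by blast
qed

lemma diag_diff:
  "diag_state d q - diag_state d p = diagm d (\<lambda>i. complex_of_real (q (Suc i) - p (Suc i)))"
  by (rule eq_matI) (auto simp: diag_state_def)

theorem proposition1:
  fixes d :: nat and p :: "nat \<Rightarrow> real" and \<epsilon> :: real
  assumes "d \<ge> 1"
    and "\<forall>i\<in>{1..d}. p i \<ge> 0"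
    and "(\<Sum>i=1..d. p i) = 1"
    and "\<forall>i\<in>{1..d}. \<forall>j\<in>{1..d}. i \<le> j \<longrightarrow> p j \<le> p i"
    and "\<epsilon> > 0"
  shows "trace_norm (sigma_A d \<epsilon> p - diag_state d p) \<le> \<epsilon>
       \<and> trace_norm (sigma_G d \<epsilon> p - diag_state d p) \<le> \<epsilon>"
proof
  have d: "d \<ge> 1" and pos: "\<forall>i\<in>{1..d}. p i \<ge> 0" and sum1: "(\<Sum>i=1..d. p i) = 1"
    and mono: "\<forall>i\<in>{1..d}. \<forall>j\<in>{1..d}. i \<le> j \<longrightarrow> p j \<le> p i" and e: "\<epsilon> > 0"
    using assms by auto
  show "trace_norm (sigma_A d \<epsilon> p - diag_state d p) \<le> \<epsilon>"
  proof -
    let ?c = "arith_cond d \<epsilon> p"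
    have rf: "?c s s" for s using e by (simp add: arith_cond_def)
    have pt: "\<bar>binned d ?c p (Suc i) - p (Suc i)\<bar> \<le> \<epsilon> / real d" if "i < d" for i
    proof -
      have "\<exists>s k. 1 \<le> s \<and> s \<le> Suc i \<and> Suc i \<le> k \<and> k \<le> d \<and> ?c s k \<and>
         \<bar>binned d ?c p (Suc i) - p (Suc i)\<bar> \<le> p s - p k"
        by (rule binned_err) (use rf mono that in auto)
      then       obtain s k where sk: "?c s k" "\<bar>binned d ?c p (Suc i) - p (Suc i)\<bar> \<le> p s - p k"
        by blast
      then show ?thesis unfolding arith_cond_def by linarith
    qed
    have "trace_norm (sigma_A d \<epsilon> p - diag_state d p)
        = (\<Sum>i<d. \<bar>binned d ?c p (Suc i) - p (Suc i)\<bar>)"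
      unfolding sigma_A_def diag_diff trace_norm_diag ..
    also have "\<dots> \<le> (\<Sum>i<d. \<epsilon> / real d)" by (rule sum_mono) (use pt in auto)
    also have "\<dots> = \<epsilon>" using d by simp
    finally show ?thesis .
  qed
  show "trace_norm (sigma_G d \<epsilon> p - diag_state d p) \<le> \<epsilon>"
  proof -
    let ?c = "geom_cond \<epsilon> p"
    have rf: "?c s s" if "1 \<le> s" "s \<le> d" for s
    proof -
      have "p s \<ge> 0" using pos that by auto
      then show ?thesis using e unfolding geom_cond_def by (simp add: algebra_simps)
    qed
    have pt: "\<bar>binned d ?c p (Suc i) - p (Suc i)\<bar> \<le> \<epsilon> * p (Suc i)" if "i < d" for i
    proof -
      have "\<exists>s k. 1 \<le> s \<and> s \<le> Suc i \<and> Suc i \<le> k \<and> k \<le> d \<and> ?c s k \<and>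
         \<bar>binned d ?c p (Suc i) - p (Suc i)\<bar> \<le> p s - p k"
        by (rule binned_err) (use rf mono that in auto)
      then       obtain s k where sk: "1 \<le> s" "s \<le> Suc i" "Suc i \<le> k" "k \<le> d" "?c s k"
        "\<bar>binned d ?c p (Suc i) - p (Suc i)\<bar> \<le> p s - p k"
        by blast
      have "p k \<le> p (Suc i)" using mono sk that by auto
      then have "\<epsilon> * p k \<le> \<epsilon> * p (Suc i)" using e by (simp add: mult_left_mono)
      then show ?thesis using sk(5,6) unfolding geom_cond_def by (simp add: algebra_simps)
    qed
    have "trace_norm (sigma_G d \<epsilon> p - diag_state d p)
        = (\<Sum>i<d. \<bar>binned d ?c p (Suc i) - p (Suc i)\<bar>)"
      unfolding sigma_G_def diag_diff trace_norm_diag ..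
    also have "\<dots> \<le> (\<Sum>i<d. \<epsilon> * p (Suc i))" by (rule sum_mono) (use pt in auto)
    also have "\<dots> = \<epsilon> * (\<Sum>i=1..d. p i)"
      by (simp add: sum_distrib_left sum.atLeast1_atMost_eq)
    also have "\<dots> = \<epsilon>" using sum1 by simp
    finally show ?thesis .
  qed
qed

end
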